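(* Let $L=L_1\times L_2$ where $L_1$ and $L_2$ are $C$-lattices, and let $n\ge1$. (1) $q_1$ is a quasi $n$-absorbing element of $L_1$ if and only if $(q_1,1_{L_2})$ is a quasi $n$-absorbing element of $L$. (2) $q_2$ is a quasi $n$-absorbing element of $L_2$ if and only if $(1_{L_1},q_2)$ is a quasi $n$-absorbing element of $L$.
   Context: A multiplicative lattice is a complete lattice with least element $0$ and compact greatest element $1$, equipped with a commutative, associative product that distributes over arbitrary joins and has $1$ as multiplicative identity. An element $a$ is compact if $a\le\bigvee_{\alpha\in I}a_\alpha$ implies $a\le\bigvee_{\alpha\in I_0}a_\alpha$ for some finite $I_0\subseteq I$. A $C$-lattice is a multiplicative lattice generated under joins by a multiplicatively closed set of compact elements. $L_1\times L_2$ carries the componentwise order and product. $a^0=1$. A proper element $q$ ($q<1$) of a multiplicative lattice $M$ is quasi $n$-absorbing if whenever $a^nb\le q$ for some compact $a,b\in M$, then $a^n\le q$ or $a^{n-1}b\le q$. *)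

theory Defs
  imports Main "HOL-Library.Product_Order"
begin

definition compact_el :: "'a::complete_lattice \<Rightarrow> bool" where
  "compact_el a \<longleftrightarrow> (\<forall>S. a \<le> Sup S \<longrightarrow> (\<exists>F. F \<subseteq> S \<and> finite F \<and> a \<le> Sup F))"

definition mult_lattice :: "('a::complete_lattice \<Rightarrow> 'a \<Rightarrow> 'a) \<Rightarrow> bool" where
  "mult_lattice m \<longleftrightarrow>
     compact_el (top::'a) \<and>
     (\<forall>a b. m a b = m b a) \<and>
     (\<forall>a b c. m (m a b) c = m a (m b c)) \<and>
     (\<forall>a S. m a (Sup S) = Sup ((m a) ` S)) \<and>
     (\<forall>a. m top a = a)"

definition C_lattice :: "('a::complete_lattice \<Rightarrow> 'a \<Rightarrow> 'a) \<Rightarrow> bool" where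
  "C_lattice m \<longleftrightarrow> mult_lattice m \<and>
     (\<exists>C. (\<forall>c\<in>C. compact_el c) \<and> top \<in> C \<and> (\<forall>a\<in>C. \<forall>b\<in>C. m a b \<in> C) \<and>
          (\<forall>x. \<exists>S. S \<subseteq> C \<and> x = Sup S))"

primrec mpow :: "('a::complete_lattice \<Rightarrow> 'a \<Rightarrow> 'a) \<Rightarrow> 'a \<Rightarrow> nat \<Rightarrow> 'a" where
  "mpow m a 0 = top"
| "mpow m a (Suc k) = m a (mpow m a k)"

definition quasi_n_absorbing ::
  "('a::complete_lattice \<Rightarrow> 'a \<Rightarrow> 'a) \<Rightarrow> nat \<Rightarrow> 'a \<Rightarrow> bool" where
  "quasi_n_absorbing m n q \<longleftrightarrow> q < top \<and>
     (\<forall>a b. compact_el a \<longrightarrow> compact_el b \<longrightarrow> m (mpow m a n) b \<le> q \<longrightarrow>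
        mpow m a n \<le> q \<or> m (mpow m a (n - 1)) b \<le> q)"

definition prod_mult ::
  "('a \<Rightarrow> 'a \<Rightarrow> 'a) \<Rightarrow> ('b \<Rightarrow> 'b \<Rightarrow> 'b) \<Rightarrow> 'a \<times> 'b \<Rightarrow> 'a \<times> 'b \<Rightarrow> 'a \<times> 'b" where
  "prod_mult m1 m2 x y = (m1 (fst x) (fst y), m2 (snd x) (snd y))"

end

theory Submission
  imports Defs
begin

lemma compact_fst:
  assumes "compact_el (a, b)" shows "compact_el a"
  unfolding compact_el_def
proof (intro allI impI)
  fix S assume h: "a \<le> Sup S"
  show "\<exists>F. F \<subseteq> S \<and> finite F \<and> a \<le> Sup F"
  proof (cases "S = {}")
    case True then show ?thesis using h by auto
  next
    case False
    have "(a, b) \<le> Sup ((\<lambda>s. (s, top)) ` S)"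
      using h False by (simp add: less_eq_prod_def fst_Sup snd_Sup image_image)
    then obtain F' where F': "F' \<subseteq> (\<lambda>s. (s, top)) ` S" "finite F'" "(a, b) \<le> Sup F'"
      using assms unfolding compact_el_def by blast
    have "a \<le> Sup (fst ` F')" using F'(3) by (simp add: less_eq_prod_def fst_Sup)
    moreover have "fst ` F' \<subseteq> S" using F'(1) by auto
    ultimately show ?thesis using F'(2) by blast
  qed
qed

lemma compact_snd:
  assumes "compact_el (a, b)" shows "compact_el b"
  unfolding compact_el_def
proof (intro allI impI)
  fix S assume h: "b \<le> Sup S"
  show "\<exists>F. F \<subseteq> S \<and> finite F \<and> b \<le> Sup F"
  proof (cases "S = {}")
    case True then show ?thesis using h by auto
  next
    case False
    have "(a, b) \<le> Sup ((\<lambda>s. (top, s)) ` S)"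
      using h False by (simp add: less_eq_prod_def fst_Sup snd_Sup image_image)
    then obtain F' where F': "F' \<subseteq> (\<lambda>s. (top, s)) ` S" "finite F'" "(a, b) \<le> Sup F'"
      using assms unfolding compact_el_def by blast
    have "b \<le> Sup (snd ` F')" using F'(3) by (simp add: less_eq_prod_def snd_Sup)
    moreover have "snd ` F' \<subseteq> S" using F'(1) by auto
    ultimately show ?thesis using F'(2) by blast
  qed
qed

lemma compact_pair_bot:
  assumes "compact_el (a::'a::complete_lattice)" shows "compact_el (a, bot::'b::complete_lattice)"
  unfolding compact_el_def
proof (intro allI impI)
  fix S :: "('a \<times> 'b) set" assume h: "(a, bot) \<le> Sup S"
  then have "a \<le> Sup (fst ` S)" by (simp add: less_eq_prod_def fst_Sup)
  then obtain F where F: "F \<subseteq> fst ` S" "finite F" "a \<le> Sup F"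
    using assms unfolding compact_el_def by blast
  then obtain G where G: "G \<subseteq> S" "finite G" "F = fst ` G"
    by (meson finite_subset_image)
  have "(a, bot) \<le> Sup G" using F G by (simp add: less_eq_prod_def fst_Sup)
  then show "\<exists>F. F \<subseteq> S \<and> finite F \<and> (a, bot) \<le> Sup F" using G by blast
qed

lemma compact_bot_pair:
  assumes "compact_el (a::'a::complete_lattice)" shows "compact_el (bot::'b::complete_lattice, a)"
  unfolding compact_el_def
proof (intro allI impI)
  fix S :: "('b \<times> 'a) set" assume h: "(bot, a) \<le> Sup S"
  then have "a \<le> Sup (snd ` S)" by (simp add: less_eq_prod_def snd_Sup)
  then obtain F where F: "F \<subseteq> snd ` S" "finite F" "a \<le> Sup F"
    using assms unfolding compact_el_def by blast
  then obtain G where G: "G \<subseteq> S" "finite G" "F = snd ` G"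
    by (meson finite_subset_image)
  have "(bot, a) \<le> Sup G" using F G by (simp add: less_eq_prod_def snd_Sup)
  then show "\<exists>F. F \<subseteq> S \<and> finite F \<and> (bot, a) \<le> Sup F" using G by blast
qed

lemma mpow_prod: "mpow (prod_mult m1 m2) (a, b) k = (mpow m1 a k, mpow m2 b k)"
  by (induction k) (auto simp: prod_mult_def Pair_top_top)

lemma top_lt1: "((q::'a::complete_lattice, top::'b::complete_lattice) < top) \<longleftrightarrow> q < top"
  unfolding Pair_top_top[symmetric] by (simp add: less_le_not_le top.extremum_unique)

lemma top_lt2: "((top::'a::complete_lattice, q::'b::complete_lattice) < top) \<longleftrightarrow> q < top"
  unfolding Pair_top_top[symmetric] by (simp add: less_le_not_le top.extremum_unique)

lemma part1:
  fixes m1 :: "'a::complete_lattice \<Rightarrow> 'a \<Rightarrow> 'a"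
    and m2 :: "'b::complete_lattice \<Rightarrow> 'b \<Rightarrow> 'b"
  shows "quasi_n_absorbing m1 n q1 \<longleftrightarrow> quasi_n_absorbing (prod_mult m1 m2) n (q1, top)"
proof
  assume H: "quasi_n_absorbing m1 n q1"
  show "quasi_n_absorbing (prod_mult m1 m2) n (q1, top)"
    unfolding quasi_n_absorbing_def
  proof (intro conjI allI impI)
    have "q1 < top" using H by (simp add: quasi_n_absorbing_def)
    then show "(q1, top::'b) < top" by (simp add: top_lt1)
    fix a b :: "'a \<times> 'b"
    assume ca: "compact_el a" and cb: "compact_el b"
      and le: "prod_mult m1 m2 (mpow (prod_mult m1 m2) a n) b \<le> (q1, top)"
    obtain a1 a2 where ea: "a = (a1, a2)" by fastforce
    obtain b1 b2 where eb: "b = (b1, b2)" by fastforce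
    have "compact_el a1" "compact_el b1" using ca cb ea eb compact_fst by blast+
    moreover have "m1 (mpow m1 a1 n) b1 \<le> q1" using le ea eb by (simp add: mpow_prod prod_mult_def)
    ultimately have "mpow m1 a1 n \<le> q1 \<or> m1 (mpow m1 a1 (n - 1)) b1 \<le> q1"
      using H unfolding quasi_n_absorbing_def by blast
    then show "mpow (prod_mult m1 m2) a n \<le> (q1, top) \<or>
          prod_mult m1 m2 (mpow (prod_mult m1 m2) a (n - 1)) b \<le> (q1, top)"
      using ea eb by (simp add: mpow_prod prod_mult_def)
  qed
next
  assume H: "quasi_n_absorbing (prod_mult m1 m2) n (q1, top)"
  show "quasi_n_absorbing m1 n q1"
    unfolding quasi_n_absorbing_def
  proof (intro conjI allI impI)
    have "(q1, top::'b) < top" using H by (simp add: quasi_n_absorbing_def)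
    then show "q1 < top" by (simp add: top_lt1)
    fix a b :: 'a
    assume ca: "compact_el a" and cb: "compact_el b" and le: "m1 (mpow m1 a n) b \<le> q1"
    have "compact_el (a, bot::'b)" "compact_el (b, bot::'b)" using ca cb compact_pair_bot by blast+
    moreover have "prod_mult m1 m2 (mpow (prod_mult m1 m2) (a, bot::'b) n) (b, bot) \<le> (q1, top)"
      using le by (simp add: mpow_prod prod_mult_def)
    ultimately have "mpow (prod_mult m1 m2) (a, bot::'b) n \<le> (q1, top) \<or>
          prod_mult m1 m2 (mpow (prod_mult m1 m2) (a, bot::'b) (n - 1)) (b, bot) \<le> (q1, top)"
      using H unfolding quasi_n_absorbing_def by blast
    then show "mpow m1 a n \<le> q1 \<or> m1 (mpow m1 a (n - 1)) b \<le> q1"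
      by (simp add: mpow_prod prod_mult_def)
  qed
qed

lemma part2:
  fixes m1 :: "'a::complete_lattice \<Rightarrow> 'a \<Rightarrow> 'a"
    and m2 :: "'b::complete_lattice \<Rightarrow> 'b \<Rightarrow> 'b"
  shows "quasi_n_absorbing m2 n q2 \<longleftrightarrow> quasi_n_absorbing (prod_mult m1 m2) n (top, q2)"
proof
  assume H: "quasi_n_absorbing m2 n q2"
  show "quasi_n_absorbing (prod_mult m1 m2) n (top, q2)"
    unfolding quasi_n_absorbing_def
  proof (intro conjI allI impI)
    have "q2 < top" using H by (simp add: quasi_n_absorbing_def)
    then show "(top::'a, q2) < top" by (simp add: top_lt2)
    fix a b :: "'a \<times> 'b"
    assume ca: "compact_el a" and cb: "compact_el b"
      and le: "prod_mult m1 m2 (mpow (prod_mult m1 m2) a n) b \<le> (top, q2)"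
    obtain a1 a2 where ea: "a = (a1, a2)" by fastforce
    obtain b1 b2 where eb: "b = (b1, b2)" by fastforce
    have "compact_el a2" "compact_el b2" using ca cb ea eb compact_snd by blast+
    moreover have "m2 (mpow m2 a2 n) b2 \<le> q2" using le ea eb by (simp add: mpow_prod prod_mult_def)
    ultimately have "mpow m2 a2 n \<le> q2 \<or> m2 (mpow m2 a2 (n - 1)) b2 \<le> q2"
      using H unfolding quasi_n_absorbing_def by blast
    then show "mpow (prod_mult m1 m2) a n \<le> (top, q2) \<or>
          prod_mult m1 m2 (mpow (prod_mult m1 m2) a (n - 1)) b \<le> (top, q2)"
      using ea eb by (simp add: mpow_prod prod_mult_def)
  qed
next
  assume H: "quasi_n_absorbing (prod_mult m1 m2) n (top, q2)"
  show "quasi_n_absorbing m2 n q2"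
    unfolding quasi_n_absorbing_def
  proof (intro conjI allI impI)
    have "(top::'a, q2) < top" using H by (simp add: quasi_n_absorbing_def)
    then show "q2 < top" by (simp add: top_lt2)
    fix a b :: 'b
    assume ca: "compact_el a" and cb: "compact_el b" and le: "m2 (mpow m2 a n) b \<le> q2"
    have "compact_el (bot::'a, a)" "compact_el (bot::'a, b)" using ca cb compact_bot_pair by blast+
    moreover have "prod_mult m1 m2 (mpow (prod_mult m1 m2) (bot::'a, a) n) (bot, b) \<le> (top, q2)"
      using le by (simp add: mpow_prod prod_mult_def)
    ultimately have "mpow (prod_mult m1 m2) (bot::'a, a) n \<le> (top, q2) \<or>
          prod_mult m1 m2 (mpow (prod_mult m1 m2) (bot::'a, a) (n - 1)) (bot, b) \<le> (top, q2)"
      using H unfolding quasi_n_absorbing_def by blast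
    then show "mpow m2 a n \<le> q2 \<or> m2 (mpow m2 a (n - 1)) b \<le> q2"
      by (simp add: mpow_prod prod_mult_def)
  qed
qed

theorem mainTheorem12:
  fixes m1 :: "'a::complete_lattice \<Rightarrow> 'a \<Rightarrow> 'a"
    and m2 :: "'b::complete_lattice \<Rightarrow> 'b \<Rightarrow> 'b"
    and q1 :: 'a and q2 :: 'b and n :: nat
  assumes "C_lattice m1" and "C_lattice m2" and "n \<ge> 1"
  shows "(quasi_n_absorbing m1 n q1 \<longleftrightarrow> quasi_n_absorbing (prod_mult m1 m2) n (q1, top))
       \<and> (quasi_n_absorbing m2 n q2 \<longleftrightarrow> quasi_n_absorbing (prod_mult m1 m2) n (top, q2))"
  using part1 part2 by blast

end
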